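(* Let $F:\mathbb{R}^d\to\mathbb{R}$ be a convex differentiable function with a (possibly non-unique) minimizer $x^*$, and let $\alpha\in(\frac12,1)$. Suppose that for all $t\ge1$, $\mathbb{E}[g_t\mid\mathcal{F}_t]=\nabla F(x_t)$ and $\|g_t\|\le G$ almost surely. Then Algorithm 1 with initial point $x_0\in\mathbb{R}^d$ and learning rates $\eta_t=\frac{1}{Gt^\alpha}$ satisfies, for all $T\ge1$, $$\mathbb{E}[F(\bar x_T)]\le F(x^* )+\frac{G}{T^{1-\alpha}}\Big(1+S\,\|x^*-x_0\|\big[2\ln(1+2\|x^*-x_0\|)+9S\big]\Big),$$ where $S=\sqrt{5+\frac{1}{2\alpha-1}}$ and $\bar x_T=\frac1T\sum_{t=1}^T x_t$.
   Context: $\|\cdot\|$ is the Euclidean norm on $\mathbb{R}^d$, $G>0$. Setting: an algorithm outputs iterates $x_1,x_2,\dots$; after outputting $x_t$ it receives a random vector $g_t\in\mathbb{R}^d$ (stochastic gradient). $\mathcal{F}_t$ is the $\sigma$-algebra generated by $x_1,\dots,x_t,g_1,\dots,g_{t-1}$. Auxiliary functions: for $\theta\in\mathbb{R}$, $S>0$, $Q\ge0$, $\psi^*(\theta,S,Q)=\exp\big(\max_{\beta\in[-1/2,1/2]}(\theta\beta-\beta^2S^2)-Q\big)$, which equals $\exp(\theta^2/(4S^2)-Q)$ if $|\theta|\le S^2$ and $\exp(|\theta|/2-S^2/4-Q)$ if $|\theta|>S^2$; and $\psi(x,S,Q)=\sup_{\theta\in\mathbb{R}}(\theta x-\psi^*(\theta,S,Q))$.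 Algorithm 1 (input: $x_0\in\mathbb{R}^d$ and learning rates $\eta_1,\eta_2,\dots$): set $S_0^2=4$, $Q_0=0$, $\theta_0=0\in\mathbb{R}^d$. For $t=1,2,\dots$: output $x_t=x_0+\frac{\theta_{t-1}}{2S_{t-1}^2}\exp\big(\frac{\|\theta_{t-1}\|^2}{4S_{t-1}^2}-Q_{t-1}\big)$ if $\|\theta_{t-1}\|\le S_{t-1}^2$, and $x_t=x_0+\frac{\theta_{t-1}}{2\|\theta_{t-1}\|}\exp\big(\frac{\|\theta_{t-1}\|}{2}-\frac{S_{t-1}^2}{4}-Q_{t-1}\big)$ otherwise (equivalently, $x_t-x_0$ is the unique minimizer of $x\mapsto \psi(\|x\|,S_{t-1},Q_{t-1})-\langle\theta_{t-1},x\rangle$); receive $g_t$; set $\ell_t=\eta_tg_t$, $S_t^2=S_{t-1}^2+\|\ell_t\|^2$ ($S_t>0$), $Q_t=Q_{t-1}+\|\ell_t\|^2/S_t^2$, $\theta_t=\theta_{t-1}-\ell_t$. *)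

theory Defs
  imports "HOL-Probability.Probability" "HOL-Probability.Conditional_Expectation"
begin

text \<open>State (S_t^2, Q_t, theta_t) of Algorithm 1 after t rounds, given the scaled
  gradients l_t = eta_t g_t (indexed from 1).\<close>
fun alg_state :: "(nat \<Rightarrow> 'd::euclidean_space) \<Rightarrow> nat \<Rightarrow> real \<times> real \<times> 'd" where
  "alg_state l 0 = (4, 0, 0)"
| "alg_state l (Suc t) =
     (case alg_state l t of (S2, Q, \<theta>) \<Rightarrow>
        (let S2' = S2 + (norm (l (Suc t)))\<^sup>2
         in (S2', Q + (norm (l (Suc t)))\<^sup>2 / S2', \<theta> - l (Suc t))))"

definition alg_out :: "real \<times> real \<times> 'd::euclidean_space \<Rightarrow> 'd" where
  "alg_out st = (case st of (S2, Q, \<theta>) \<Rightarrow>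
     (if norm \<theta> \<le> S2
      then (exp ((norm \<theta>)\<^sup>2 / (4 * S2) - Q) / (2 * S2)) *\<^sub>R \<theta>
      else (exp (norm \<theta> / 2 - S2 / 4 - Q) / (2 * norm \<theta>)) *\<^sub>R \<theta>))"

definition alg_x :: "'d::euclidean_space \<Rightarrow> (nat \<Rightarrow> real) \<Rightarrow> (nat \<Rightarrow> 'd) \<Rightarrow> nat \<Rightarrow> 'd" where
  "alg_x x0 \<eta> g t = x0 + alg_out (alg_state (\<lambda>s. \<eta> s *\<^sub>R g s) (t - 1))"

text \<open>Filtration F_t: sigma-algebra generated by g_1, ..., g_{t-1}
  (the iterates x_1..x_t are deterministic Borel functions of these).\<close>
definition grad_filtration :: "'m measure \<Rightarrow> (nat \<Rightarrow> 'm \<Rightarrow> 'd::euclidean_space) \<Rightarrow> nat \<Rightarrow> 'm measure" where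
  "grad_filtration M g t =
     vimage_algebra (space M) (\<lambda>\<omega>. restrict (\<lambda>i. g i \<omega>) {1..<t}) (PiM {1..<t} (\<lambda>_. borel))"

end

theory Submission
  imports Defs
begin


lemma inner_self_nn: "inner x x = norm x * norm x"
  by (simp add: dot_square_norm power2_eq_square)

definition hh :: "real \<Rightarrow> real \<Rightarrow> real" where
  "hh a r = (if r \<le> a then r\<^sup>2 / (4*a) else r/2 - a/4)"

definition bopt :: "real \<Rightarrow> 'd::euclidean_space \<Rightarrow> 'd" where
  "bopt a v = (if norm v \<le> a then (1/(2*a)) *\<^sub>R v else (1/(2*norm v)) *\<^sub>R v)"

lemma bopt_norm: assumes "a > 0" shows "norm (bopt a v) \<le> 1/2"
proof (cases "norm v \<le> a")
  case True then show ?thesis using assms by (simp add: bopt_def field_simps)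
next
  case False then show ?thesis using assms by (simp add: bopt_def)
qed

lemma hh_eq: assumes "a > 0" shows "hh a (norm v) = bopt a v \<bullet> v - a * (norm (bopt a v))\<^sup>2"
proof (cases "norm v \<le> a")
  case True
  have "v \<bullet> v = norm v * norm v" by (simp flip: power2_eq_square add: power2_norm_eq_inner)
  then show ?thesis using assms True
    by (simp add: bopt_def hh_def field_simps power2_eq_square)
next
  case False
  then have "norm v > 0" using assms by linarith
  then have "v \<noteq> 0" by auto
  then show ?thesis using False assms inner_self_nn[of v]
    by (simp add: bopt_def hh_def power2_norm_eq_inner field_simps power2_eq_square)
qed

lemma hh_opt:
  fixes b v :: "'d::euclidean_space"
  assumes "a > 0" "norm b \<le> 1/2"
  shows "b \<bullet> v - a * (norm b)\<^sup>2 \<le> hh a (norm v) - a * (norm (b - bopt a v))\<^sup>2"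
proof -
  define b0 where "b0 = bopt a v"
  define d where "d = b - b0"
  have bd: "b = b0 + d" by (simp add: d_def)
  have key: "d \<bullet> (v - (2*a) *\<^sub>R b0) \<le> 0"
  proof (cases "norm v \<le> a")
    case True then have "v - (2*a) *\<^sub>R b0 = 0" using assms by (simp add: b0_def bopt_def)
    then show ?thesis by simp
  next
    case False
    then have nv: "norm v > 0" using assms by linarith
    have b0v: "b0 = (1/(2*norm v)) *\<^sub>R v" using False by (simp add: b0_def bopt_def)
    have "v - (2*a) *\<^sub>R b0 = (2*(norm v - a)) *\<^sub>R b0" using nv
      using nv by (simp add: b0v algebra_simps)
    moreover have "d \<bullet> b0 \<le> 0"
    proof -
      have nb0: "norm b0 = 1/2" using nv by (simp add: b0v)
      have "b \<bullet> b0 \<le> norm b * norm b0" by (rule norm_cauchy_schwarz)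
      also have "\<dots> \<le> 1/4" proof -
        have "norm b * norm b0 = norm b / 2" using nb0 by simp
        then show ?thesis using assms by linarith
      qed
      finally have "b \<bullet> b0 \<le> 1/4" .
      moreover have "b0 \<bullet> b0 = 1/4" by (simp only: inner_self_nn nb0)
      ultimately show ?thesis by (simp add: d_def inner_diff_left)
    qed
    ultimately show ?thesis using False nv by (simp add: inner_commute mult_nonneg_nonpos)
  qed
  have "b \<bullet> v - a * (norm b)\<^sup>2 = (b0 \<bullet> v - a * (norm b0)\<^sup>2) + d \<bullet> (v - (2*a) *\<^sub>R b0) - a * (norm d)\<^sup>2"
    by (simp add: bd power2_norm_eq_inner inner_add_left inner_add_right inner_diff_right algebra_simps inner_commute)
  also have "\<dots> \<le> hh a (norm v) - a * (norm d)\<^sup>2"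
    using key hh_eq[OF assms(1), of v] by (simp add: b0_def)
  finally show ?thesis by (simp add: d_def b0_def)
qed

lemma exp_quad_bound:
  fixes x :: real assumes "\<bar>x\<bar> \<le> 1/2" shows "exp (- x - x\<^sup>2) \<le> 1 - x"
proof (cases "x \<ge> 0")
  case True
  have e: "1 + (x + x\<^sup>2) + (x + x\<^sup>2)\<^sup>2/2 \<le> exp (x + x\<^sup>2)"
    using True by (intro exp_lower_Taylor_quadratic) simp
  have p: "(1 + (x + x\<^sup>2) + (x + x\<^sup>2)\<^sup>2/2) * (1 - x) \<ge> 1"
  proof -
    have "(1 + (x + x\<^sup>2) + (x + x\<^sup>2)\<^sup>2/2) * (1 - x) = 1 + x\<^sup>2 * (1 - x - x\<^sup>2 - x^3)/2"
      by (simp add: field_simps power2_eq_square power3_eq_cube)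
    moreover have "1 - x - x\<^sup>2 - x^3 \<ge> 0"
    proof -
      have "x\<^sup>2 \<le> (1/2)\<^sup>2" using assms True by (intro power_mono) auto
      then have "x\<^sup>2 \<le> 1/4" by (simp add: power2_eq_square)
      moreover have "x^3 \<le> (1/2)^3" using assms True by (intro power_mono) auto
      then have "x^3 \<le> 1/8" by (simp add: power3_eq_cube)
      ultimately show ?thesis using assms True by simp
    qed
    ultimately show ?thesis by simp
  qed
  have "(1 + (x + x\<^sup>2) + (x + x\<^sup>2)\<^sup>2/2) * (1 - x) \<le> exp (x + x\<^sup>2) * (1 - x)"
    using e assms by (intro mult_right_mono) auto
  then have ee: "exp (x + x\<^sup>2) * (1 - x) \<ge> 1" using p by linarith
  have "exp (- x - x\<^sup>2) = 1 / exp (x + x\<^sup>2)" by (simp add: exp_minus[symmetric] field_simps flip: exp_add)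
  also have "\<dots> \<le> 1 - x" using ee by (simp add: divide_le_eq mult.commute)
  finally show ?thesis .
next
  case False
  have "(-x) - (-x)\<^sup>2 \<le> ln (1 + (-x))"
    using False assms by (intro ln_one_plus_pos_lower_bound) auto
  then have "exp (- x - x\<^sup>2) \<le> exp (ln (1 - x))" by simp
  also have "\<dots> = 1 - x" using assms by simp
  finally show ?thesis .
qed


lemma out_eq: assumes "a > 0"
  shows "alg_out (a, Q, \<theta>) = exp (hh a (norm \<theta>) - Q) *\<^sub>R bopt a \<theta>"
  using assms by (simp add: alg_out_def hh_def bopt_def)

lemma step_ineq:
  fixes \<theta> l :: "'d::euclidean_space"
  assumes apos: "a > 0" and l1: "norm l \<le> 1"
  shows "exp (hh (a + (norm l)\<^sup>2) (norm (\<theta> - l)) - (Q + (norm l)\<^sup>2 / (a + (norm l)\<^sup>2)))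
         \<le> exp (hh a (norm \<theta>) - Q) - l \<bullet> alg_out (a, Q, \<theta>)"
proof -
  define L where "L = norm l"
  define a' where "a' = a + L\<^sup>2"
  define v where "v = \<theta> - l"
  define b where "b = bopt a' v"
  define b0 where "b0 = bopt a \<theta>"
  define d where "d = b - b0"
  define x where "x = b0 \<bullet> l"
  have L0: "L \<ge> 0" and L1: "L \<le> 1" using l1 by (auto simp: L_def)
  have a'pos: "a' > 0" using apos by (simp add: a'_def add_pos_nonneg)
  have nb: "norm b \<le> 1/2" unfolding b_def by (rule bopt_norm[OF a'pos])
  have nb0: "norm b0 \<le> 1/2" unfolding b0_def by (rule bopt_norm[OF apos])
  have h1: "hh a' (norm v) = (b \<bullet> \<theta> - a*(norm b)\<^sup>2) - b \<bullet> l - L\<^sup>2*(norm b)\<^sup>2"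
    using hh_eq[OF a'pos, of v] by (simp add: b_def v_def a'_def inner_diff_right algebra_simps)
  have h2: "b \<bullet> \<theta> - a*(norm b)\<^sup>2 \<le> hh a (norm \<theta>) - a*(norm d)\<^sup>2"
    using hh_opt[OF apos nb, of \<theta>] by (simp add: d_def b0_def)
  have bd: "b = b0 + d" by (simp add: d_def)
  have e1: "b \<bullet> l = x + d \<bullet> l" by (simp add: bd x_def inner_add_left)
  have e2: "(norm b)\<^sup>2 = (norm b0)\<^sup>2 + 2 * (b0 \<bullet> d) + (norm d)\<^sup>2"
    by (simp add: bd power2_norm_eq_inner inner_add_left inner_add_right inner_commute)
  have cx: "\<bar>x\<bar> \<le> norm b0 * L" unfolding x_def L_def by (rule Cauchy_Schwarz_ineq2)
  have cx2: "x\<^sup>2 \<le> L\<^sup>2 * (norm b0)\<^sup>2"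
  proof -
    have "\<bar>x\<bar>\<^sup>2 \<le> (norm b0 * L)\<^sup>2" using cx by (intro power_mono) auto
    then show ?thesis by (simp add: power_mult_distrib mult.commute)
  qed
  have cp: "d \<bullet> l \<ge> - (norm d * L)"
    using Cauchy_Schwarz_ineq2[of d l] unfolding L_def by linarith
  have cq0: "b0 \<bullet> d \<ge> - (norm d / 2)"
  proof -
    have "\<bar>b0 \<bullet> d\<bar> \<le> norm b0 * norm d" by (rule Cauchy_Schwarz_ineq2)
    also have "\<dots> \<le> (1/2) * norm d" using nb0 by (intro mult_right_mono) auto
    finally show ?thesis by linarith
  qed
  have cq: "L\<^sup>2 * (2 * (b0 \<bullet> d)) \<ge> - (norm d * L)"
  proof -
    have "L\<^sup>2 * (2 * (b0 \<bullet> d)) \<ge> L\<^sup>2 * (- norm d)"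
      using cq0 by (intro mult_left_mono) auto
    moreover have "L\<^sup>2 * norm d \<le> L * norm d"
      using L0 L1 by (intro mult_right_mono) (auto simp: power2_eq_square mult_le_cancel_right1 mult_left_le)
    ultimately show ?thesis by (simp add: mult.commute)
  qed
  have sq: "a' * (norm d)\<^sup>2 - 2 * (norm d * L) + L\<^sup>2 / a' \<ge> 0"
  proof -
    have "a' * (norm d)\<^sup>2 - 2 * (norm d * L) + L\<^sup>2 / a' = (a' * norm d - L)\<^sup>2 / a'"
      using a'pos by (simp add: field_simps power2_eq_square)
    then show ?thesis using a'pos by simp
  qed
  have h3: "- a*(norm d)\<^sup>2 - b \<bullet> l - L\<^sup>2*(norm b)\<^sup>2 - L\<^sup>2/a' \<le> - x - x\<^sup>2"
  proof -
    have "- a*(norm d)\<^sup>2 - b \<bullet> l - L\<^sup>2*(norm b)\<^sup>2 - L\<^sup>2/a'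
        = - x - L\<^sup>2 * (norm b0)\<^sup>2 - (a' * (norm d)\<^sup>2 + d \<bullet> l + L\<^sup>2 * (2 * (b0 \<bullet> d)) + L\<^sup>2/a')"
      by (simp add: e1 e2 a'_def algebra_simps)
    also have "\<dots> \<le> - x - x\<^sup>2" using cx2 cp cq sq by linarith
    finally show ?thesis .
  qed
  have h4: "\<bar>x\<bar> \<le> 1/2"
  proof -
    have "norm b0 * L \<le> (1/2) * 1" using nb0 L0 L1 by (intro mult_mono) auto
    then show ?thesis using cx by linarith
  qed
  define E where "E = exp (hh a (norm \<theta>) - Q)"
  have "exp (hh a' (norm v) - (Q + L\<^sup>2/a')) \<le> exp (hh a (norm \<theta>) - Q + (- x - x\<^sup>2))"
    using h1 h2 h3 by simp
  also have "\<dots> = E * exp (- x - x\<^sup>2)" by (simp add: E_def exp_add)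
  also have "\<dots> \<le> E * (1 - x)" using exp_quad_bound[OF h4] by (simp add: E_def)
  also have "\<dots> = E - l \<bullet> alg_out (a, Q, \<theta>)"
    by (simp add: out_eq[OF apos] E_def x_def b0_def inner_commute algebra_simps)
  finally show ?thesis by (simp add: a'_def v_def L_def E_def)
qed




definition sS :: "(nat \<Rightarrow> 'd::euclidean_space) \<Rightarrow> nat \<Rightarrow> real" where "sS l t = fst (alg_state l t)"
definition qQ :: "(nat \<Rightarrow> 'd::euclidean_space) \<Rightarrow> nat \<Rightarrow> real" where "qQ l t = fst (snd (alg_state l t))"
definition th :: "(nat \<Rightarrow> 'd::euclidean_space) \<Rightarrow> nat \<Rightarrow> 'd" where "th l t = snd (snd (alg_state l t))"

lemma alg_state_split: "alg_state l t = (sS l t, qQ l t, th l t)"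
  by (simp add: sS_def qQ_def th_def)

lemma state_0: "sS l 0 = 4" "qQ l 0 = 0" "th l 0 = 0"
  by (simp_all add: sS_def qQ_def th_def)

lemma state_Suc:
  "sS l (Suc t) = sS l t + (norm (l (Suc t)))\<^sup>2"
  "qQ l (Suc t) = qQ l t + (norm (l (Suc t)))\<^sup>2 / (sS l t + (norm (l (Suc t)))\<^sup>2)"
  "th l (Suc t) = th l t - l (Suc t)"
  by (simp_all add: sS_def qQ_def th_def Let_def split: prod.splits)

lemma sS_eq: "sS l t = 4 + (\<Sum>s=1..t. (norm (l s))\<^sup>2)"
  by (induction t) (simp_all add: state_0 state_Suc)

lemma th_eq: "th l t = - (\<Sum>s=1..t. l s)"
  by (induction t) (simp_all add: state_0 state_Suc)

lemma sS_ge: "sS l t \<ge> 4"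
  unfolding sS_eq by (simp add: sum_nonneg)

lemma qQ_bounds: "0 \<le> qQ l t \<and> qQ l t \<le> (sS l t - 4) / 4"
proof (induction t)
  case 0 then show ?case by (simp add: state_0)
next
  case (Suc t)
  define L2 where "L2 = (norm (l (Suc t)))\<^sup>2"
  have L20: "L2 \<ge> 0" by (simp add: L2_def)
  have S4: "sS l t + L2 \<ge> 4" using sS_ge[of l t] L20 by linarith
  have "L2 / (sS l t + L2) \<le> L2 / 4" using S4 L20 by (intro divide_left_mono) auto
  moreover have "L2 / (sS l t + L2) \<ge> 0" using S4 L20 by simp
  ultimately show ?case using Suc by (simp add: state_Suc L2_def[symmetric])
qed

definition Pot :: "(nat \<Rightarrow> 'd::euclidean_space) \<Rightarrow> nat \<Rightarrow> real" where
  "Pot l t = exp (hh (sS l t) (norm (th l t)) - qQ l t)"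

lemma wealth:
  assumes "\<And>s. s \<in> {1..T} \<Longrightarrow> norm (l s) \<le> 1"
  shows "(\<Sum>t=1..T. l t \<bullet> alg_out (alg_state l (t-1))) \<le> 1 - Pot l T"
  using assms
proof (induction T)
  case 0 then show ?case by (simp add: Pot_def state_0 hh_def)
next
  case (Suc T)
  have IH: "(\<Sum>t=1..T. l t \<bullet> alg_out (alg_state l (t-1))) \<le> 1 - Pot l T"
    using Suc.prems by (intro Suc.IH) auto
  have l1: "norm (l (Suc T)) \<le> 1" using Suc.prems by auto
  have a0: "sS l T > 0" using sS_ge[of l T] by linarith
  have st: "Pot l (Suc T) \<le> Pot l T - l (Suc T) \<bullet> alg_out (alg_state l T)"
    using step_ineq[OF a0 l1, of "th l T" "qQ l T"]
    by (simp add: Pot_def state_Suc alg_state_split[of l T])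
  show ?case using IH st by simp
qed

lemma conj_bound:
  fixes A Q r x :: real
  assumes "A > 0" "0 \<le> Q" "Q \<le> A/4" "r \<ge> 0" "x \<ge> 0"
  shows "r * x - exp (hh A r - Q) \<le> 2 * x * ln (1 + 2 * x) + A * x"
proof (cases "r \<le> A")
  case True
  have "r * x \<le> A * x" using True assms by (intro mult_right_mono) auto
  moreover have "x * ln (1 + 2*x) \<ge> 0" using assms by simp
  ultimately show ?thesis using exp_gt_zero[of "hh A r - Q"] by linarith
next
  case False
  define y where "y = r/2 - A/4 - Q"
  have hy: "hh A r - Q = y" using False by (simp add: hh_def y_def)
  have rx: "r * x = 2 * x * y + 2 * x * (A/4 + Q)" by (simp add: y_def algebra_simps)
  have "2 * x * (A/4 + Q) \<le> 2 * x * (A/2)" using assms by (intro mult_left_mono) auto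
  moreover have "2 * x * y - exp y \<le> 2 * x * ln (1 + 2 * x)"
  proof (cases "x = 0")
    case True then show ?thesis by simp
  next
    case False
    then have xp: "x > 0" using assms by simp
    have "exp (y - ln (2*x)) \<ge> 1 + (y - ln (2*x))" by (rule exp_ge_add_one_self)
    then have "2*x * exp (y - ln (2*x)) \<ge> 2*x * (1 + (y - ln (2*x)))" using xp by (intro mult_left_mono) auto
    moreover have "2*x * exp (y - ln (2*x)) = exp y" using xp by (simp add: exp_diff)
    ultimately have "exp y \<ge> 2*x * (1 + y - ln (2*x))" by (simp add: add_diff_eq)
    then have "2 * x * y - exp y \<le> 2 * x * ln (2 * x) - 2 * x" by (simp add: algebra_simps)
    moreover have "ln (2*x) \<le> ln (1 + 2*x)" using xp by simp
    then have "2 * x * ln (2 * x) \<le> 2 * x * ln (1 + 2*x)" using xp by (intro mult_left_mono) auto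
    ultimately show ?thesis using xp by linarith
  qed
  ultimately show ?thesis using hy rx by (simp add: algebra_simps)
qed

lemma regret:
  fixes l :: "nat \<Rightarrow> 'd::euclidean_space"
  assumes "\<And>s. s \<in> {1..T} \<Longrightarrow> norm (l s) \<le> 1"
  shows "(\<Sum>t=1..T. l t \<bullet> (alg_out (alg_state l (t-1)) - u))
          \<le> 1 + 2 * norm u * ln (1 + 2 * norm u) + sS l T * norm u"
proof -
  have "(\<Sum>t=1..T. l t \<bullet> (alg_out (alg_state l (t-1)) - u))
      = (\<Sum>t=1..T. l t \<bullet> alg_out (alg_state l (t-1))) + th l T \<bullet> u"
    by (simp add: inner_diff_right sum_subtractf th_eq inner_sum_left)
  also have "\<dots> \<le> 1 - Pot l T + norm (th l T) * norm u"
    using wealth[of T l, OF assms] norm_cauchy_schwarz[of "th l T" u] by linarith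
  also have "\<dots> \<le> 1 + 2 * norm u * ln (1 + 2 * norm u) + sS l T * norm u"
    using conj_bound[of "sS l T" "qQ l T" "norm (th l T)" "norm u"] sS_ge[of l T] qQ_bounds[of l T]
    by (simp add: Pot_def)
  finally show ?thesis .
qed




lemma psum_step:
  fixes p :: real and T :: nat
  assumes "p > 1" "T \<ge> 1"
  shows "real (Suc T) powr (-p) \<le> (real T powr (1-p) - real (Suc T) powr (1-p)) / (p - 1)"
proof -
  have "\<exists>z. real T < z \<and> z < real T + 1 \<and>
     (real T + 1) powr (1-p) - real T powr (1-p) = (real T + 1 - real T) * ((1-p) * z powr ((1-p) - 1))"
  proof (rule MVT2)
    fix y assume "real T \<le> y" "y \<le> real T + 1"
    then have "y > 0" using assms by linarith
    then show "DERIV (\<lambda>y. y powr (1-p)) y :> (1-p) * y powr ((1-p) - 1)"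
      by (rule has_real_derivative_powr)
  qed simp
  then obtain z where z: "real T < z" "z < real T + 1"
    "(real T + 1) powr (1-p) - real T powr (1-p) = (1-p) * z powr (-p)" by auto
  have zp: "z > 0" using z assms by linarith
  have "real (Suc T) powr (-p) \<le> z powr (-p)"
    using z zp assms by (intro powr_mono2') auto
  then have "(p-1) * real (Suc T) powr (-p) \<le> (p-1) * z powr (-p)"
    using assms by (intro mult_left_mono) auto
  also have "\<dots> = real T powr (1-p) - real (Suc T) powr (1-p)" using z(3) by (simp add: algebra_simps)
  finally show ?thesis using assms by (simp add: field_simps mult.commute)
qed

lemma psum:
  fixes p :: real
  assumes "p > 1"
  shows "(\<Sum>t=1..T. real t powr (-p)) \<le> 1 + 1 / (p - 1)"
proof -
  have gen: "T \<ge> 1 \<Longrightarrow> (\<Sum>t=1..T. real t powr (-p)) \<le> 1 + (1 - real T powr (1-p)) / (p - 1)" for T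
  proof (induction T)
    case 0 then show ?case by simp
  next
    case (Suc T)
    show ?case
    proof (cases "T = 0")
      case True then show ?thesis by simp
    next
      case False
      then have T1: "T \<ge> 1" by simp
      have "(\<Sum>t=1..Suc T. real t powr (-p)) = (\<Sum>t=1..T. real t powr (-p)) + real (Suc T) powr (-p)"
        by simp
      also have "\<dots> \<le> 1 + (1 - real T powr (1-p)) / (p - 1)
           + (real T powr (1-p) - real (Suc T) powr (1-p)) / (p - 1)"
        using Suc.IH[OF T1] psum_step[OF assms T1] by linarith
      also have "\<dots> = 1 + ((1 - real T powr (1-p)) + (real T powr (1-p) - real (Suc T) powr (1-p))) / (p - 1)"
        by (simp only: add_divide_distrib)
      also have "\<dots> = 1 + (1 - real (Suc T) powr (1-p)) / (p - 1)"
        by simp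
      finally show ?thesis .
    qed
  qed
  have bd: "(1 - real T powr (1-p)) / (p - 1) \<le> 1 / (p - 1)"
    using assms by (intro divide_right_mono) auto
  show ?thesis
  proof (cases "T = 0")
    case True then show ?thesis using assms by simp
  next
    case False
    then have "T \<ge> 1" by simp
    from gen[OF this] bd show ?thesis by linarith
  qed
qed

lemma det_bound:
  fixes l :: "nat \<Rightarrow> 'd::euclidean_space" and \<alpha> :: real
  assumes a1: "1/2 < \<alpha>" and nl: "\<And>s. s \<in> {1..T} \<Longrightarrow> norm (l s) \<le> 1 / real s powr \<alpha>"
  shows "(\<Sum>t=1..T. l t \<bullet> (alg_out (alg_state l (t-1)) - u))
          \<le> 1 + sqrt (5 + 1 / (2 * \<alpha> - 1)) * norm u *
                  (2 * ln (1 + 2 * norm u) + 9 * sqrt (5 + 1 / (2 * \<alpha> - 1)))"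
proof -
  define S where "S = sqrt (5 + 1 / (2 * \<alpha> - 1))"
  define x where "x = norm u"
  have x0: "x \<ge> 0" by (simp add: x_def)
  have pa: "2 * \<alpha> - 1 > 0" using a1 by simp
  have S2: "S\<^sup>2 = 5 + 1 / (2 * \<alpha> - 1)" using pa by (simp add: S_def)
  have S1: "S \<ge> 1" using pa by (simp add: S_def)
  have l1: "norm (l s) \<le> 1" if "s \<in> {1..T}" for s
  proof -
    have "1 \<le> real s powr \<alpha>" using that a1 by (intro ge_one_powr_ge_zero) auto
    then have "1 / real s powr \<alpha> \<le> 1" by (auto simp: divide_le_eq)
    then show ?thesis using nl[OF that] by linarith
  qed
  have sq: "(norm (l s))\<^sup>2 \<le> real s powr (- (2 * \<alpha>))" if "s \<in> {1..T}" for s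
  proof -
    have "(norm (l s))\<^sup>2 \<le> (1 / real s powr \<alpha>)\<^sup>2" using nl[OF that] by (intro power_mono) auto
    also have "\<dots> = real s powr (- (2 * \<alpha>))" using that
      by (simp add: power2_eq_square powr_minus powr_add[symmetric] field_simps)
    finally show ?thesis .
  qed
  have "sS l T \<le> 4 + (\<Sum>s=1..T. real s powr (- (2 * \<alpha>)))"
    unfolding sS_eq using sq by (intro add_left_mono sum_mono) auto
  also have "\<dots> \<le> 4 + (1 + 1 / (2 * \<alpha> - 1))" using psum[of "2*\<alpha>" T] a1 by simp
  finally have sST: "sS l T \<le> S\<^sup>2" using S2 by simp
  have "(\<Sum>t=1..T. l t \<bullet> (alg_out (alg_state l (t-1)) - u)) \<le> 1 + 2 * x * ln (1 + 2 * x) + sS l T * x"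
    using regret[of T l u] l1 by (simp add: x_def)
  also have "\<dots> \<le> 1 + S * (2 * x * ln (1 + 2 * x)) + 9 * S\<^sup>2 * x"
  proof -
    have lnn: "2 * x * ln (1 + 2 * x) \<ge> 0" using x0 by simp
    have "2 * x * ln (1 + 2 * x) \<le> S * (2 * x * ln (1 + 2 * x))"
      using S1 lnn mult_right_mono[OF S1 lnn] by simp
    moreover have "sS l T * x \<le> 9 * S\<^sup>2 * x" using sST x0 by (intro mult_right_mono) (auto intro: order_trans[of _ "S\<^sup>2"])
    ultimately show ?thesis by linarith
  qed
  also have "\<dots> = 1 + S * x * (2 * ln (1 + 2 * x) + 9 * S)" by (simp add: algebra_simps power2_eq_square)
  finally show ?thesis by (simp add: S_def x_def)
qed




lemma tangent_ineq:
  fixes F :: "'d::euclidean_space \<Rightarrow> real"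
  assumes cvx: "convex_on UNIV F" and der: "\<And>x. (F has_derivative (\<lambda>h. gradF x \<bullet> h)) (at x)"
  shows "F y \<ge> F x + gradF x \<bullet> (y - x)"
proof -
  define w where "w = y - x"
  define \<phi> where "\<phi> = (\<lambda>s::real. F (x + s *\<^sub>R w))"
  have c1: "convex_on UNIV \<phi>"
  proof (rule convex_onI)
    fix t a b :: real assume t: "t > 0" "t < 1"
    have "x + ((1 - t) *\<^sub>R a + t *\<^sub>R b) *\<^sub>R w = (1 - t) *\<^sub>R (x + a *\<^sub>R w) + t *\<^sub>R (x + b *\<^sub>R w)"
      by (simp add: algebra_simps)
    then show "\<phi> ((1 - t) *\<^sub>R a + t *\<^sub>R b) \<le> (1 - t) * \<phi> a + t * \<phi> b"
      unfolding \<phi>_def using convex_onD[OF cvx, of t "x + a *\<^sub>R w" "x + b *\<^sub>R w"] t by simp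
  qed simp
  have d1: "((\<lambda>s::real. x + s *\<^sub>R w) has_derivative (\<lambda>h. h *\<^sub>R w)) (at 0)"
    by (auto intro!: derivative_eq_intros)
  have d2: "(F has_derivative (\<lambda>h. gradF x \<bullet> h)) (at (x + (0::real) *\<^sub>R w))" using der by simp
  have "(\<phi> has_derivative (\<lambda>h. gradF x \<bullet> (h *\<^sub>R w))) (at 0)"
    unfolding \<phi>_def by (rule has_derivative_compose[OF d1 d2])
  then have "(\<phi> has_field_derivative (gradF x \<bullet> w)) (at 0 within UNIV)"
    by (simp add: has_field_derivative_def mult_commute_abs)
  then have "\<phi> 1 - \<phi> 0 \<ge> (gradF x \<bullet> w) * (1 - 0)"
    by (intro convex_on_imp_above_tangent[OF c1]) auto
  then show ?thesis by (simp add: \<phi>_def w_def)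
qed

lemma alg_state_cong: "(\<And>s. s \<in> {1..k} \<Longrightarrow> l s = l' s) \<Longrightarrow> alg_state l k = alg_state l' k"
proof (induction k)
  case 0 then show ?case by simp
next
  case (Suc k)
  have "alg_state l k = alg_state l' k" using Suc by auto
  moreover have "l (Suc k) = l' (Suc k)" using Suc by auto
  ultimately show ?case by simp
qed

lemma meas_out:
  assumes [measurable]: "a \<in> borel_measurable N" "q \<in> borel_measurable N" "h \<in> borel_measurable N"
  shows "(\<lambda>\<omega>. alg_out (a \<omega>, q \<omega>, h \<omega>)) \<in> borel_measurable N"
  unfolding alg_out_def by simp measurable

lemma meas_state:
  fixes \<eta> :: "nat \<Rightarrow> real" and t :: nat
  shows "k < t \<Longrightarrow> (\<lambda>f. sS (\<lambda>s. \<eta> s *\<^sub>R (f s :: 'd::euclidean_space)) k) \<in> borel_measurable (PiM {1..<t} (\<lambda>_. borel))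
     \<and> (\<lambda>f. qQ (\<lambda>s. \<eta> s *\<^sub>R (f s :: 'd)) k) \<in> borel_measurable (PiM {1..<t} (\<lambda>_. borel))
     \<and> (\<lambda>f. th (\<lambda>s. \<eta> s *\<^sub>R (f s :: 'd)) k) \<in> borel_measurable (PiM {1..<t} (\<lambda>_. borel))"
proof (induction k)
  case 0 then show ?case by (simp add: state_0)
next
  case (Suc k)
  then have IH: "(\<lambda>f. sS (\<lambda>s. \<eta> s *\<^sub>R (f s :: 'd)) k) \<in> borel_measurable (PiM {1..<t} (\<lambda>_. borel))"
     "(\<lambda>f. qQ (\<lambda>s. \<eta> s *\<^sub>R (f s :: 'd)) k) \<in> borel_measurable (PiM {1..<t} (\<lambda>_. borel))"
     "(\<lambda>f. th (\<lambda>s. \<eta> s *\<^sub>R (f s :: 'd)) k) \<in> borel_measurable (PiM {1..<t} (\<lambda>_. borel))" by auto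
  have [measurable]: "(\<lambda>f. f (Suc k) :: 'd) \<in> borel_measurable (PiM {1..<t} (\<lambda>_. borel))"
    using Suc by (intro measurable_component_singleton) auto
  note IH[measurable]
  show ?case unfolding state_Suc by (intro conjI; measurable)
qed

lemma hh_le: "a > 0 \<Longrightarrow> r \<ge> 0 \<Longrightarrow> hh a r \<le> r"
proof -
  assume a: "a > 0" "r \<ge> 0"
  show ?thesis
  proof (cases "r \<le> a")
    case True
    have "r\<^sup>2 \<le> r * a" using True a by (simp add: power2_eq_square mult_left_mono)
    then have "r\<^sup>2 / (4*a) \<le> r * a / (4 * a)" using a by (intro divide_right_mono) auto
    also have "\<dots> = r / 4" using a by simp
    finally show ?thesis using True a by (simp add: hh_def)
  next
    case False then show ?thesis using a by (simp add: hh_def)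
  qed
qed

lemma out_norm:
  assumes "a > 0" "Q \<ge> 0"
  shows "norm (alg_out (a, Q, \<theta>)) \<le> exp (norm \<theta>)"
proof -
  have "norm (alg_out (a, Q, \<theta>)) = exp (hh a (norm \<theta>) - Q) * norm (bopt a \<theta>)"
    using assms by (simp add: out_eq)
  also have "\<dots> \<le> exp (norm \<theta>) * 1"
    using bopt_norm[OF assms(1), of \<theta>] hh_le[OF assms(1), of "norm \<theta>"] assms
    by (intro mult_mono) auto
  finally show ?thesis by simp
qed

lemma state_out_norm:
  assumes "\<And>s. s \<in> {1..k} \<Longrightarrow> norm (l s) \<le> 1"
  shows "norm (alg_out (alg_state l k)) \<le> exp (real k)"
proof -
  have "norm (th l k) \<le> (\<Sum>s=1..k. norm (l s))" unfolding th_eq by (simp add: norm_sum)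
  also have "\<dots> \<le> (\<Sum>s=1..k. 1)" using assms by (intro sum_mono) auto
  finally have "norm (th l k) \<le> real k" by simp
  moreover have "sS l k > 0" using sS_ge[of l k] by linarith
  ultimately show ?thesis
    using out_norm[of "sS l k" "qQ l k" "th l k"] qQ_bounds[of l k] alg_state_split[of l k]
    by (metis (no_types, lifting) exp_le_cancel_iff order_trans)
qed

lemma sfs:
  assumes "prob_space M" "subalgebra M N"
  shows "sigma_finite_subalgebra M N"
proof -
  interpret prob_space M by fact
  have "finite_measure_subalgebra M N" by unfold_locales (rule assms(2))
  then show ?thesis by (rule finite_measure_subalgebra_is_sigma_finite)
qed




theorem theorem2:
  fixes M :: "'m measure"
    and F :: "'d::euclidean_space \<Rightarrow> real"
    and gradF :: "'d \<Rightarrow> 'd"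
    and g :: "nat \<Rightarrow> 'm \<Rightarrow> 'd"
    and xstar x0 :: 'd
    and G \<alpha> :: real
    and T :: nat
  assumes "prob_space M"
    and "convex_on UNIV F"
    and "\<And>x. (F has_derivative (\<lambda>h. gradF x \<bullet> h)) (at x)"
    and "\<And>x. F xstar \<le> F x"
    and "1/2 < \<alpha>" and "\<alpha> < 1"
    and "G > 0"
    and "\<And>t. t \<ge> 1 \<Longrightarrow> g t \<in> borel_measurable M"
    and "\<And>t. t \<ge> 1 \<Longrightarrow> AE \<omega> in M. norm (g t \<omega>) \<le> G"
    and "\<And>t b. t \<ge> 1 \<Longrightarrow> b \<in> Basis \<Longrightarrow>
           AE \<omega> in M. real_cond_exp M (grad_filtration M g t) (\<lambda>\<omega>. g t \<omega> \<bullet> b) \<omega>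
              = gradF (alg_x x0 (\<lambda>s. 1 / (G * real s powr \<alpha>)) (\<lambda>s. g s \<omega>) t) \<bullet> b"
    and "T \<ge> 1"
  shows "prob_space.expectation M
           (\<lambda>\<omega>. F ((1 / real T) *\<^sub>R (\<Sum>t=1..T. alg_x x0 (\<lambda>s. 1 / (G * real s powr \<alpha>)) (\<lambda>s. g s \<omega>) t)))
         \<le> F xstar + G / real T powr (1 - \<alpha>) *
             (1 + sqrt (5 + 1 / (2 * \<alpha> - 1)) * norm (xstar - x0) *
                  (2 * ln (1 + 2 * norm (xstar - x0)) + 9 * sqrt (5 + 1 / (2 * \<alpha> - 1))))"
proof -
  note probM = assms(1) and cvx = assms(2) and der = assms(3) and Fmin = assms(4)
    and a1 = assms(5) and a2 = assms(6) and Gp = assms(7) and gm = assms(8) and gb = assms(9)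
    and ceq = assms(10) and T1 = assms(11)
  interpret P: prob_space M by (rule probM)
  define \<eta> where "\<eta> = (\<lambda>s::nat. 1 / (G * real s powr \<alpha>))"
  define X where "X = (\<lambda>t \<omega>. alg_x x0 \<eta> (\<lambda>s. g s \<omega>) t)"
  define Ft where "Ft = (\<lambda>t. grad_filtration M g t)"
  define ce where "ce = (\<lambda>t b \<omega>. real_cond_exp M (Ft t) (\<lambda>\<omega>. g t \<omega> \<bullet> b) \<omega>)"
  define u where "u = xstar - x0"
  define lo where "lo = (\<lambda>\<omega> s. \<eta> s *\<^sub>R g s \<omega>)"
  define Y where "Y = (\<lambda>t b \<omega>. \<eta> t * ((X t \<omega> - xstar) \<bullet> b))"
  define S where "S = sqrt (5 + 1 / (2 * \<alpha> - 1))"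
  define B where "B = 1 + S * norm u * (2 * ln (1 + 2 * norm u) + 9 * S)"
  define C where "C = G * real T powr \<alpha> / real T"
  define Z where "Z = (\<lambda>\<omega>. \<Sum>t\<in>{1..T}. \<Sum>b\<in>Basis. Y t b \<omega> * ce t b \<omega>)"
  define W where "W = (\<lambda>\<omega>. \<Sum>t\<in>{1..T}. \<Sum>b\<in>Basis. Y t b \<omega> * (g t \<omega> \<bullet> b))"
  define xbar where "xbar = (\<lambda>\<omega>. (1 / real T) *\<^sub>R (\<Sum>t=1..T. X t \<omega>))"
  have \<eta>pos: "\<eta> s > 0" if "s \<ge> 1" for s using that Gp by (simp add: \<eta>_def)
  have X_eq: "X t \<omega> = x0 + alg_out (alg_state (lo \<omega>) (t-1))" for t \<omega>
    by (simp add: X_def alg_x_def lo_def)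

  have Rmeas: "(\<lambda>\<omega>. restrict (\<lambda>i. g i \<omega>) {1..<t}) \<in> measurable M (PiM {1..<t} (\<lambda>_. borel))" for t
    by (rule measurable_restrict) (use gm in auto)
  have subalg: "subalgebra M (Ft t)" for t
    unfolding subalgebra_def Ft_def grad_filtration_def
    using sets_image_in_sets[OF refl Rmeas[of t]] by simp
  have XmF: "X t \<in> borel_measurable (Ft t)" if t1: "t \<ge> 1" for t
  proof -
    define R where "R = (\<lambda>\<omega>. restrict (\<lambda>i. g i \<omega>) {1..<t})"
    define H where "H = (\<lambda>f. x0 + alg_out (sS (\<lambda>s. \<eta> s *\<^sub>R (f s :: 'd)) (t-1),
         qQ (\<lambda>s. \<eta> s *\<^sub>R f s) (t-1), th (\<lambda>s. \<eta> s *\<^sub>R f s) (t-1)))"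
    have ms: "(\<lambda>f. sS (\<lambda>s. \<eta> s *\<^sub>R (f s :: 'd)) (t-1)) \<in> borel_measurable (PiM {1..<t} (\<lambda>_. borel))"
       "(\<lambda>f. qQ (\<lambda>s. \<eta> s *\<^sub>R (f s :: 'd)) (t-1)) \<in> borel_measurable (PiM {1..<t} (\<lambda>_. borel))"
       "(\<lambda>f. th (\<lambda>s. \<eta> s *\<^sub>R (f s :: 'd)) (t-1)) \<in> borel_measurable (PiM {1..<t} (\<lambda>_. borel))"
      using meas_state[of "t-1" t \<eta>] t1 by auto
    have "(\<lambda>f. alg_out (sS (\<lambda>s. \<eta> s *\<^sub>R (f s :: 'd)) (t-1),
         qQ (\<lambda>s. \<eta> s *\<^sub>R f s) (t-1), th (\<lambda>s. \<eta> s *\<^sub>R f s) (t-1))) \<in> borel_measurable (PiM {1..<t} (\<lambda>_. borel))"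
      by (rule meas_out[OF ms])
    then have Hm: "H \<in> borel_measurable (PiM {1..<t} (\<lambda>_. borel))"
      unfolding H_def by (intro borel_measurable_add) auto
    have Rm: "R \<in> measurable (Ft t) (PiM {1..<t} (\<lambda>_. borel))"
      unfolding Ft_def grad_filtration_def R_def
      by (rule measurable_vimage_algebra1) (auto simp: space_PiM)
    have "(\<lambda>\<omega>. H (R \<omega>)) \<in> borel_measurable (Ft t)"
      using measurable_compose[OF Rm Hm] .
    moreover have "X t = (\<lambda>\<omega>. H (R \<omega>))"
    proof
      fix \<omega>
      have "alg_state (lo \<omega>) (t-1) = alg_state (\<lambda>s. \<eta> s *\<^sub>R R \<omega> s) (t-1)"
        by (rule alg_state_cong) (use t1 in \<open>auto simp: lo_def R_def\<close>)
      then show "X t \<omega> = H (R \<omega>)"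
        by (simp add: X_eq H_def alg_state_split)
    qed
    ultimately show ?thesis by simp
  qed
  have XmM: "X t \<in> borel_measurable M" if "t \<ge> 1" for t
    by (rule measurable_from_subalg[OF subalg XmF[OF that]])
  have sf: "sigma_finite_subalgebra M (Ft t)" for t by (rule sfs[OF probM subalg])

  have AEg: "AE \<omega> in M. \<forall>s\<in>{1..T}. norm (g s \<omega>) \<le> G"
    by (rule AE_finite_allI) (use gb in auto)
  have AEc: "AE \<omega> in M. \<forall>t\<in>{1..T}. \<forall>b\<in>Basis. ce t b \<omega> = gradF (X t \<omega>) \<bullet> b"
  proof (rule AE_finite_allI, simp, rule AE_finite_allI, simp)
    fix t b assume "t \<in> {1..T}" "b \<in> (Basis :: 'd set)"
    then show "AE \<omega> in M. ce t b \<omega> = gradF (X t \<omega>) \<bullet> b"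
      using ceq[of t b] by (simp add: ce_def Ft_def X_def \<eta>_def)
  qed

  define K where "K = norm x0 + exp (real T) + norm xstar"
  have lo_bound: "norm (lo \<omega> s) \<le> 1 / real s powr \<alpha>" if "norm (g s \<omega>) \<le> G" "s \<ge> 1" for \<omega> s
  proof -
    have "norm (lo \<omega> s) = \<eta> s * norm (g s \<omega>)" using \<eta>pos[OF that(2)] by (simp add: lo_def)
    also have "\<dots> \<le> \<eta> s * G" using that \<eta>pos[OF that(2)] by (intro mult_left_mono) auto
    also have "\<dots> = 1 / real s powr \<alpha>" using Gp by (simp add: \<eta>_def)
    finally show ?thesis .
  qed
  have lo_1: "norm (lo \<omega> s) \<le> 1" if "norm (g s \<omega>) \<le> G" "s \<ge> 1" for \<omega> s
  proof -
    have "1 \<le> real s powr \<alpha>" using that a1 by (intro ge_one_powr_ge_zero) auto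
    then have "1 / real s powr \<alpha> \<le> 1" by (auto simp: divide_le_eq)
    then show ?thesis using lo_bound[OF that] by linarith
  qed
  have Xbound: "norm (X t \<omega> - xstar) \<le> K"
    if "\<forall>s\<in>{1..T}. norm (g s \<omega>) \<le> G" "t \<in> {1..T}" for \<omega> t
  proof -
    have "norm (alg_out (alg_state (lo \<omega>) (t-1))) \<le> exp (real (t-1))"
      by (rule state_out_norm) (use that lo_1 in auto)
    also have "\<dots> \<le> exp (real T)" using that by simp
    finally have "norm (alg_out (alg_state (lo \<omega>) (t-1))) \<le> exp (real T)" .
    then show ?thesis unfolding X_eq K_def
      using norm_triangle_ineq4[of "x0 + alg_out (alg_state (lo \<omega>) (t-1))" xstar]
        norm_triangle_ineq[of x0 "alg_out (alg_state (lo \<omega>) (t-1))"] by linarith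
  qed

  have Ym: "Y t b \<in> borel_measurable (Ft t)" if "t \<ge> 1" for t b
  proof -
    have [measurable]: "X t \<in> borel_measurable (Ft t)" by (rule XmF[OF that])
    show ?thesis unfolding Y_def by measurable
  qed
  have YmM: "Y t b \<in> borel_measurable M" if "t \<ge> 1" for t b
    by (rule measurable_from_subalg[OF subalg Ym[OF that]])
  have gbm: "(\<lambda>\<omega>. g t \<omega> \<bullet> b) \<in> borel_measurable M" if "t \<ge> 1" for t b
  proof -
    have [measurable]: "g t \<in> borel_measurable M" by (rule gm[OF that])
    show ?thesis by measurable
  qed
  have Yg_int: "integrable M (\<lambda>\<omega>. Y t b \<omega> * (g t \<omega> \<bullet> b))" if tT: "t \<in> {1..T}" and bB: "b \<in> Basis" for t b
  proof -
    have t1: "t \<ge> 1" using tT by simp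
    have "AE \<omega> in M. norm (Y t b \<omega> * (g t \<omega> \<bullet> b)) \<le> norm (\<eta> t * K * G)"
      using AEg
    proof eventually_elim
      case (elim \<omega>)
      have "\<bar>(X t \<omega> - xstar) \<bullet> b\<bar> \<le> norm (X t \<omega> - xstar) * norm b" by (rule Cauchy_Schwarz_ineq2)
      also have "\<dots> \<le> K" using Xbound[OF elim tT] bB by simp
      finally have h1: "\<bar>(X t \<omega> - xstar) \<bullet> b\<bar> \<le> K" .
      have "\<bar>g t \<omega> \<bullet> b\<bar> \<le> norm (g t \<omega>) * norm b" by (rule Cauchy_Schwarz_ineq2)
      also have "\<dots> \<le> G" using elim tT bB by simp
      finally have h2: "\<bar>g t \<omega> \<bullet> b\<bar> \<le> G" .
      have "\<bar>Y t b \<omega> * (g t \<omega> \<bullet> b)\<bar> = \<eta> t * (\<bar>(X t \<omega> - xstar) \<bullet> b\<bar> * \<bar>g t \<omega> \<bullet> b\<bar>)"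
        using \<eta>pos[OF t1] by (simp add: Y_def abs_mult)
      also have "\<dots> \<le> \<eta> t * (K * G)"
        using h1 h2 \<eta>pos[OF t1] by (intro mult_left_mono mult_mono) auto
      finally have "\<bar>Y t b \<omega> * (g t \<omega> \<bullet> b)\<bar> \<le> \<eta> t * K * G" by (simp add: mult.assoc)
      also have "\<dots> \<le> \<bar>\<eta> t * K * G\<bar>" by simp
      finally show ?case by simp
    qed
    moreover have "(\<lambda>\<omega>. Y t b \<omega> * (g t \<omega> \<bullet> b)) \<in> borel_measurable M"
      using YmM[OF t1] gbm[OF t1] by (rule borel_measurable_times)
    ultimately show ?thesis using Bochner_Integration.integrable_bound[OF P.integrable_const[of "\<eta> t * K * G"]] by blast
  qed
  have ce_int: "integrable M (\<lambda>\<omega>. Y t b \<omega> * ce t b \<omega>)"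
    and ce_eq: "(\<integral>\<omega>. Y t b \<omega> * ce t b \<omega> \<partial>M) = (\<integral>\<omega>. Y t b \<omega> * (g t \<omega> \<bullet> b) \<partial>M)"
    if "t \<in> {1..T}" "b \<in> Basis" for t b
    using sigma_finite_subalgebra.real_cond_exp_intg[OF sf Yg_int[OF that] Ym gbm] that
    unfolding ce_def by auto
  have Zint: "integrable M Z" unfolding Z_def
    by (intro Bochner_Integration.integrable_sum ce_int) auto
  have Wint: "integrable M W" unfolding W_def
    by (intro Bochner_Integration.integrable_sum Yg_int) auto
  have ZW: "(\<integral>\<omega>. Z \<omega> \<partial>M) = (\<integral>\<omega>. W \<omega> \<partial>M)"
  proof -
    have "(\<integral>\<omega>. Z \<omega> \<partial>M) = (\<Sum>t\<in>{1..T}. \<Sum>b\<in>Basis. (\<integral>\<omega>. Y t b \<omega> * ce t b \<omega> \<partial>M))"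
      unfolding Z_def by (simp add: Bochner_Integration.integral_sum Bochner_Integration.integrable_sum ce_int)
    also have "\<dots> = (\<Sum>t\<in>{1..T}. \<Sum>b\<in>Basis. (\<integral>\<omega>. Y t b \<omega> * (g t \<omega> \<bullet> b) \<partial>M))"
      by (intro sum.cong refl ce_eq) auto
    also have "\<dots> = (\<integral>\<omega>. W \<omega> \<partial>M)"
      unfolding W_def by (simp add: Bochner_Integration.integral_sum Bochner_Integration.integrable_sum Yg_int)
    finally show ?thesis .
  qed
  have Wt: "(\<Sum>b\<in>Basis. Y t b \<omega> * (g t \<omega> \<bullet> b)) = lo \<omega> t \<bullet> (alg_out (alg_state (lo \<omega>) (t-1)) - u)" for t \<omega>
  proof -
    have "(\<Sum>b\<in>Basis. Y t b \<omega> * (g t \<omega> \<bullet> b)) = \<eta> t * (\<Sum>b\<in>Basis. ((X t \<omega> - xstar) \<bullet> b) * (g t \<omega> \<bullet> b))"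
      by (simp add: Y_def sum_distrib_left mult.assoc)
    also have "\<dots> = \<eta> t * ((X t \<omega> - xstar) \<bullet> g t \<omega>)"
      by (simp add: euclidean_inner[of "X t \<omega> - xstar" "g t \<omega>"])
    also have "\<dots> = lo \<omega> t \<bullet> (alg_out (alg_state (lo \<omega>) (t-1)) - u)"
      by (simp add: lo_def X_eq u_def inner_commute algebra_simps)
    finally show ?thesis .
  qed
  have AEdet: "AE \<omega> in M. W \<omega> \<le> B"
    using AEg
  proof eventually_elim
    case (elim \<omega>)
    have "W \<omega> = (\<Sum>t=1..T. lo \<omega> t \<bullet> (alg_out (alg_state (lo \<omega>) (t-1)) - u))"
      unfolding W_def using Wt by simp
    also have "\<dots> \<le> B" unfolding B_def S_def
      by (rule det_bound[OF a1]) (use elim lo_bound in auto)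
    finally show ?case .
  qed
  have intW: "(\<integral>\<omega>. W \<omega> \<partial>M) \<le> B"
    by (rule P.integral_le_const[OF Wint AEdet])

  have Cnn: "C \<ge> 0" using Gp by (simp add: C_def)
  have AEmain: "AE \<omega> in M. F xstar \<le> F (xbar \<omega>) \<and> F (xbar \<omega>) \<le> F xstar + C * Z \<omega>"
    using AEg AEc
  proof eventually_elim
    case (elim \<omega>)
    define D where "D = (\<lambda>t. gradF (X t \<omega>) \<bullet> (X t \<omega> - xstar))"
    have tang: "F (X t \<omega>) \<le> F xstar + D t" for t
      using tangent_ineq[OF cvx der, where x="X t \<omega>" and y=xstar]
      by (simp add: D_def inner_diff_right)
    have Dnn: "D t \<ge> 0" for t using tang[of t] Fmin[of "X t \<omega>"] by linarith
    have Tpos: "real T > 0" using T1 by simp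
    have jen: "F (xbar \<omega>) \<le> (\<Sum>t\<in>{1..T}. (1 / real T) * F (X t \<omega>))"
    proof -
      have "F (\<Sum>t\<in>{1..T}. (1 / real T) *\<^sub>R X t \<omega>) \<le> (\<Sum>t\<in>{1..T}. (1 / real T) * F (X t \<omega>))"
        by (rule convex_on_sum[OF _ _ cvx]) (use T1 in auto)
      then show ?thesis by (simp add: xbar_def scaleR_sum_right)
    qed
    also have "\<dots> \<le> (\<Sum>t\<in>{1..T}. (1 / real T) * (F xstar + D t))"
      using tang Tpos by (intro sum_mono mult_left_mono) auto
    also have "\<dots> = F xstar + (1 / real T) * (\<Sum>t\<in>{1..T}. D t)"
    proof -
      have "(\<Sum>t\<in>{1..T}. (1 / real T) * (F xstar + D t)) = (1 / real T) * (\<Sum>t\<in>{1..T}. F xstar + D t)"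
        by (simp only: sum_distrib_left)
      also have "(\<Sum>t\<in>{1..T}. F xstar + D t) = real T * F xstar + (\<Sum>t\<in>{1..T}. D t)"
        by (simp add: sum.distrib)
      finally show ?thesis using Tpos by (simp add: field_simps)
    qed
    finally have chain: "F (xbar \<omega>) \<le> F xstar + (1 / real T) * (\<Sum>t\<in>{1..T}. D t)" .
    have sD: "(\<Sum>t\<in>{1..T}. D t) \<le> (\<Sum>t\<in>{1..T}. (G * real T powr \<alpha>) * (\<eta> t * D t))"
    proof (rule sum_mono)
      fix t assume tT: "t \<in> {1..T}"
      have "real t powr \<alpha> \<le> real T powr \<alpha>" using tT a1 by (intro powr_mono2) auto
      moreover have "real t powr \<alpha> > 0" using tT by simp
      ultimately have "1 \<le> real T powr \<alpha> / real t powr \<alpha>" by simp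
      also have "\<dots> = G * real T powr \<alpha> * \<eta> t" using Gp by (simp add: \<eta>_def)
      finally have "1 * D t \<le> (G * real T powr \<alpha> * \<eta> t) * D t" using Dnn by (intro mult_right_mono) auto
      then show "D t \<le> (G * real T powr \<alpha>) * (\<eta> t * D t)" by (simp add: mult.assoc)
    qed
    have sE: "(\<Sum>t\<in>{1..T}. (G * real T powr \<alpha>) * (\<eta> t * D t)) = G * real T powr \<alpha> * Z \<omega>"
    proof -
      have "\<eta> t * D t = (\<Sum>b\<in>Basis. Y t b \<omega> * ce t b \<omega>)" if "t \<in> {1..T}" for t
      proof -
        have "\<eta> t * D t = \<eta> t * (\<Sum>b\<in>Basis. (gradF (X t \<omega>) \<bullet> b) * ((X t \<omega> - xstar) \<bullet> b))"
          by (simp add: D_def euclidean_inner[of "gradF (X t \<omega>)" "X t \<omega> - xstar"])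
        also have "\<dots> = (\<Sum>b\<in>Basis. Y t b \<omega> * ce t b \<omega>)"
          using elim(2) that by (simp add: Y_def sum_distrib_left mult.commute mult.left_commute)
        finally show ?thesis .
      qed
      then show ?thesis unfolding Z_def by (simp add: sum_distrib_left)
    qed
    have "(1 / real T) * (\<Sum>t\<in>{1..T}. D t) \<le> (1 / real T) * (G * real T powr \<alpha> * Z \<omega>)"
      using sD sE Tpos by (intro mult_left_mono) auto
    then have "F (xbar \<omega>) \<le> F xstar + (1 / real T) * (G * real T powr \<alpha> * Z \<omega>)"
      using chain by linarith
    then have up: "F (xbar \<omega>) \<le> F xstar + C * Z \<omega>" by (simp add: C_def)
    show ?case using up Fmin by auto
  qed
  have Fc: "continuous_on UNIV F"
    using der by (intro continuous_at_imp_continuous_on ballI has_derivative_continuous) auto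
  have xbm: "xbar \<in> borel_measurable M"
    unfolding xbar_def by (intro borel_measurable_scaleR borel_measurable_const borel_measurable_sum XmM) auto
  have Fxm: "(\<lambda>\<omega>. F (xbar \<omega>)) \<in> borel_measurable M"
    by (rule borel_measurable_continuous_on[OF Fc xbm])
  have Fxint: "integrable M (\<lambda>\<omega>. F (xbar \<omega>))"
  proof (rule Bochner_Integration.integrable_bound[OF _ Fxm])
    show "integrable M (\<lambda>\<omega>. \<bar>F xstar\<bar> + \<bar>C * Z \<omega>\<bar>)"
      using Zint by (intro Bochner_Integration.integrable_add integrable_abs integrable_mult_right) auto
    show "AE \<omega> in M. norm (F (xbar \<omega>)) \<le> norm (\<bar>F xstar\<bar> + \<bar>C * Z \<omega>\<bar>)"
      using AEmain by eventually_elim auto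
  qed
  have "(\<integral>\<omega>. F (xbar \<omega>) \<partial>M) \<le> (\<integral>\<omega>. F xstar + C * Z \<omega> \<partial>M)"
    using Fxint Zint AEmain by (intro integral_mono_AE) auto
  also have "\<dots> = F xstar + C * (\<integral>\<omega>. Z \<omega> \<partial>M)"
    using Zint P.prob_space by (simp add: Bochner_Integration.integral_add)
  also have "\<dots> \<le> F xstar + C * B"
    using intW ZW Cnn by (simp add: mult_left_mono)
  also have "C = G / real T powr (1 - \<alpha>)"
    using T1 by (simp add: C_def powr_diff)
  finally show ?thesis
    by (simp add: xbar_def X_def \<eta>_def B_def S_def u_def)
qed

end
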